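(* Let $L(t)=(l_{ij}(t))_{i,j=1}^m$ satisfy Assumption A4 and $\sigma>0$. Suppose there exist $\delta>0$ and $T>0$ such that for every interval $I=[t_1,t_1+T]\subset[0,\infty)$ the graph $G(I,\delta)$ has a spanning tree. Then there exist $\delta_1>0$ and $T_1>0$ such that $\eta(V(t_0+T_1,t_0))>\delta_1$ for all $t_0\ge0$.
   Context: Assumption A4: (a) $l_{ij}(t)\ge0$ for $i\neq j$ are measurable and $l_{ii}(t)=-\sum_{j\ne i}l_{ij}(t)$; (b) there is $M_1>0$ with $|l_{ij}(t)|\le M_1$ for all $i,j,t$. $V(t,t_0)$ is the solution matrix (identity at $t_0$) of $\dot u=\sigma L(t)u$, $u\in\mathbb R^m$ (it is a stochastic matrix). For a stochastic matrix $V=(v_{ij})$ with rows $v_i$, $\eta(V)=\min_{i,j}\sum_{k=1}^m\min\{v_{ik},v_{jk}\}$; $V$ is called $\delta_1$-scrambling if $\eta(V)>\delta_1$. For a compact interval $I=[t_1,t_2]$ and $\delta>0$, $G(I,\delta)$ is the directed graph on $\{1,\dots,m\}$ with an edge from $j$ to $i$ iff $\int_{t_1}^{t_2}l_{ij}(\tau)d\tau>\delta$. A directed graph has a spanning tree if some vertex reaches every other vertex along directed edges. *)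

theory Defs
  imports "HOL-Analysis.Analysis"
begin

definition eta :: "real^'n::finite^'n \<Rightarrow> real" where
  "eta V = Min {(\<Sum>k\<in>UNIV. min (V $ i $ k) (V $ j $ k)) | i j. True}"

text \<open>Edge set of G([t1,t2],delta): an edge from j to i iff the integral of l_ij over
  [t1,t2] exceeds delta. Pairs are (source, target).\<close>
definition graph_edges :: "(real \<Rightarrow> real^'n::finite^'n) \<Rightarrow> real \<Rightarrow> real \<Rightarrow> real \<Rightarrow> ('n \<times> 'n) set" where
  "graph_edges L t1 t2 \<delta> = {(j, i). integral {t1..t2} (\<lambda>\<tau>. L \<tau> $ i $ j) > \<delta>}"

text \<open>A directed graph (edge set E on vertex type 'n) has a spanning tree iff some vertex
  reaches every vertex along directed edges.\<close>
definition has_spanning_tree :: "('n \<times> 'n) set \<Rightarrow> bool" where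
  "has_spanning_tree E \<longleftrightarrow> (\<exists>r. \<forall>v. (r, v) \<in> E\<^sup>*)"

end

theory Submission
  imports Defs
begin

lemma integrable_bdd:
  fixes f :: "real \<Rightarrow> real"
  assumes "f \<in> borel_measurable lborel" "\<And>t. \<bar>f t\<bar> \<le> M"
  shows "f integrable_on {a..b}"
proof (rule measurable_bounded_by_integrable_imp_integrable[where g="\<lambda>_. M"])
  have "f \<in> borel_measurable lebesgue"
    by (rule measurable_completion[OF assms(1)])
  then show "f \<in> borel_measurable (lebesgue_on {a..b})"
    by (simp add: measurable_restrict_space1)
qed (use assms in auto)


lemma gronwall0:
  fixes n :: "real \<Rightarrow> real"
  assumes cont: "continuous_on {a..b} n" and nn: "\<And>t. t\<in>{a..b} \<Longrightarrow> 0 \<le> n t"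
    and le: "\<And>t. t \<in> {a..b} \<Longrightarrow> n t \<le> K * integral {a..t} n"
    and t: "t \<in> {a..b}"
  shows "n t = 0"
proof -
  define N where "N = (\<lambda>t. integral {a..t} n)"
  define g where "g = (\<lambda>t. exp (-K*t) * N t)"
  have Ncont: "continuous_on {a..b} N"
    unfolding N_def by (rule indefinite_integral_continuous_1[OF integrable_continuous_interval[OF cont]])
  have Nder: "(N has_real_derivative n x) (at x)" if "a < x" "x < b" for x
    using integral_has_real_derivative[OF cont, of x] that at_within_Icc_at[OF that]
    unfolding N_def by auto
  have Nnn: "N x \<ge> 0" if "x \<in> {a..b}" for x
    unfolding N_def
    apply (rule integral_nonneg)
    using integrable_continuous_interval[OF continuous_on_subset[OF cont]] that nn by auto
  have "g t \<le> g a"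
  proof (rule DERIV_nonpos_imp_decreasing_open[of a t g])
    show "a \<le> t" using t by auto
    show "continuous_on {a..t} g"
      unfolding g_def using t
      by (intro continuous_intros continuous_on_subset[OF Ncont]) auto
    fix x assume x: "a < x" "x < t"
    have "(g has_real_derivative (-K * exp (-K*x)) * N x + exp (-K*x) * n x) (at x)"
      unfolding g_def using Nder[of x] x t
      by (auto intro!: derivative_eq_intros)
    moreover have "(-K * exp (-K*x)) * N x + exp (-K*x) * n x \<le> 0"
    proof -
      have "n x \<le> K * N x" using le[of x] x t unfolding N_def by auto
      then have "exp (-K*x) * n x \<le> exp (-K*x) * (K * N x)" by (simp add: mult_left_mono)
      then show ?thesis by (simp add: algebra_simps)
    qed
    ultimately show "\<exists>y. (g has_real_derivative y) (at x) \<and> y \<le> 0" by blast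
  qed
  moreover have "g a = 0" unfolding g_def N_def by simp
  ultimately have "N t \<le> 0" unfolding g_def by (simp add: mult_le_0_iff)
  with Nnn[OF t] have "N t = 0" by simp
  with le[OF t] nn[OF t] show ?thesis unfolding N_def by simp
qed

lemma decay_pure:
  fixes y :: "real \<Rightarrow> real"
  assumes cont: "continuous_on {a..b} y" and lam: "lm > 0" and ab: "a \<le> b"
    and le: "\<And>t. t \<in> {a..b} \<Longrightarrow> y b - y t \<ge> - lm * integral {t..b} y"
  shows "y b \<ge> exp (-lm*(b-a)) * y a"
proof -
  define Y where "Y = (\<lambda>t. integral {t..b} y)"
  define g where "g = (\<lambda>t. lm * exp (lm*t) * Y t + y b * exp (lm*t))"
  have Ycont: "continuous_on {a..b} Y"
    unfolding Y_def by (rule indefinite_integral_continuous_1'[OF integrable_continuous_interval[OF cont]])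
  have Yder: "(Y has_real_derivative - y x) (at x)" if "a < x" "x < b" for x
    using integral_has_real_derivative'[OF cont, of x] that at_within_Icc_at[OF that]
    unfolding Y_def by auto
  have "g a \<le> g b"
  proof (rule DERIV_nonneg_imp_increasing_open[of a b g])
    show "a \<le> b" by fact
    show "continuous_on {a..b} g"
      unfolding g_def
      by (intro continuous_intros Ycont)
    fix x assume x: "a < x" "x < b"
    have "(g has_real_derivative (lm * (lm * exp (lm*x)) * Y x + lm * exp (lm*x) * (- y x) + y b * (lm * exp (lm*x)))) (at x)"
      unfolding g_def using Yder[of x] x
      by (auto intro!: derivative_eq_intros)
    moreover have "(lm * (lm * exp (lm*x)) * Y x + lm * exp (lm*x) * (- y x) + y b * (lm * exp (lm*x))) \<ge> 0"
    proof -
      have "0 \<le> lm * Y x - y x + y b" using le[of x] x unfolding Y_def by auto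
      then have "0 \<le> (lm * exp (lm*x)) * (lm * Y x - y x + y b)" using lam by simp
      then show ?thesis by (simp add: algebra_simps)
    qed
    ultimately show "\<exists>z. (g has_real_derivative z) (at x) \<and> 0 \<le> z" by blast
  qed
  then have A: "lm * exp (lm*a) * Y a + y b * exp (lm*a) \<le> y b * exp (lm*b)"
    unfolding g_def Y_def by simp
  have B: "y b - y a \<ge> - lm * Y a" using le[of a] ab unfolding Y_def by auto
  have "exp (lm*a) * y a \<le> exp (lm*a) * (y b + lm * Y a)"
    using B by (simp add: mult_left_mono)
  also have "\<dots> \<le> y b * exp (lm*b)" using A by (simp add: algebra_simps)
  finally have C: "exp (lm*a) * y a \<le> y b * exp (lm*b)" .
  have "exp (-lm*(b-a)) * y a = exp (-lm*b) * (exp (lm*a) * y a)"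
    by (simp add: algebra_simps flip: exp_add)
  also have "\<dots> \<le> exp (-lm*b) * (y b * exp (lm*b))"
    using C by (simp add: mult_left_mono)
  also have "\<dots> = y b" by (simp add: algebra_simps flip: exp_add)
  finally show ?thesis .
qed


fun Qrel :: "(nat \<Rightarrow> ('a \<times> 'a) set) \<Rightarrow> nat \<Rightarrow> ('a \<times> 'a) set" where
  "Qrel F 0 = Id"
| "Qrel F (Suc j) = F j O Qrel F j"

lemma root_edge:
  assumes "(\<rho>, z) \<in> E\<^sup>*" "\<rho> \<notin> A" "z \<in> A"
  shows "\<exists>x z'. (x, z') \<in> E \<and> x \<notin> A \<and> z' \<in> A"
  using assms by (induction rule: rtrancl_induct) auto

lemma comb:
  fixes E :: "nat \<Rightarrow> ('a::finite \<times> 'a) set"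
  assumes roots: "\<And>j. j < CARD('a)*CARD('a) \<Longrightarrow> \<exists>\<rho>. \<forall>v. (\<rho>,v) \<in> (E j)\<^sup>*"
  shows "\<exists>\<rho>. \<forall>y. (\<rho>,y) \<in> Qrel (\<lambda>j. E j \<union> Id) (CARD('a)*CARD('a))"
proof (rule ccontr)
  define F where "F = (\<lambda>j. E j \<union> Id)"
  define N where "N = CARD('a)*CARD('a)"
  define anc where "anc j y = {x. (x,y) \<in> Qrel F j}" for j y
  assume contra: "\<not> ?thesis"
  then have nr: "\<forall>\<rho>. \<exists>y. \<rho> \<notin> anc N y" by (auto simp: anc_def F_def N_def)
  have step_sub: "anc j y \<subseteq> anc (Suc j) y" for j y unfolding anc_def F_def by auto
  have mono: "anc j y \<subseteq> anc k y" if "j \<le> k" for j k y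
    using lift_Suc_mono_le[of "\<lambda>j. anc j y", OF step_sub that] .
  have self: "y \<in> anc j y" for j y
    by (induction j) (auto simp: anc_def F_def)
  have grow: "anc j y \<subset> anc (Suc j) y" if h1: "\<rho> \<notin> anc j y" and h2: "\<forall>v. (\<rho>,v) \<in> (E j)\<^sup>*" for j y \<rho>
  proof -
    obtain x z' where xz: "(x, z') \<in> E j" "x \<notin> anc j y" "z' \<in> anc j y"
      using root_edge[of \<rho> y "E j" "anc j y"] h1 h2 self by blast
    then have "x \<in> anc (Suc j) y" unfolding anc_def F_def by auto
    with xz step_sub show ?thesis by blast
  qed
  define \<Phi> where "\<Phi> j = (\<Sum>y\<in>UNIV. card (anc j y))" for j
  have lb: "\<Phi> j \<ge> CARD('a) + j" if "j \<le> N" for j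
    using that
  proof (induction j)
    case 0
    have "anc 0 y = {y}" for y unfolding anc_def by auto
    then show ?case unfolding \<Phi>_def by simp
  next
    case (Suc j)
    then have jN: "j < N" by simp
    obtain \<rho> where \<rho>: "\<forall>v. (\<rho>,v) \<in> (E j)\<^sup>*" using roots jN unfolding N_def by blast
    obtain y where "\<rho> \<notin> anc N y" using nr by blast
    then have "\<rho> \<notin> anc j y" using mono[of j N y] jN by auto
    then have "anc j y \<subset> anc (Suc j) y" using grow \<rho> by blast
    then have "card (anc j y) < card (anc (Suc j) y)" by (simp add: psubset_card_mono)
    moreover have "card (anc j x) \<le> card (anc (Suc j) x)" for x
      using step_sub by (simp add: card_mono)
    ultimately have "\<Phi> j < \<Phi> (Suc j)" unfolding \<Phi>_def
      by (intro sum_strict_mono_ex1) auto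
    with Suc show ?case by simp
  qed
  have "\<Phi> N \<le> N"
  proof -
    have "card (anc N y) \<le> CARD('a)" for y by (simp add: card_mono)
    then have "\<Phi> N \<le> (\<Sum>y\<in>(UNIV::'a set). CARD('a))" unfolding \<Phi>_def by (intro sum_mono) auto
    then show ?thesis unfolding N_def by simp
  qed
  moreover have "CARD('a) > 0" by simp
  ultimately show False using lb[of N] by linarith
qed


locale sys =
  fixes L :: "real \<Rightarrow> real^'n::finite^'n" and \<sigma> M1 t0 :: real and u :: "'n \<Rightarrow> real \<Rightarrow> real"
  assumes offdiag: "\<And>t i j. i \<noteq> j \<Longrightarrow> L t $ i $ j \<ge> 0"
    and diagneg: "\<And>t i. L t $ i $ i \<le> 0"
    and bounded: "\<And>t i j. \<bar>L t $ i $ j\<bar> \<le> M1"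
    and M1_pos: "M1 > 0" and sigma_pos: "\<sigma> > 0"
    and cont: "\<And>i b. continuous_on {t0..b} (u i)"
    and eq: "\<And>i a b. t0 \<le> a \<Longrightarrow> a \<le> b \<Longrightarrow>
       ((\<lambda>r. \<sigma> * (\<Sum>j\<in>UNIV. L r $ i $ j * u j r)) has_integral (u i b - u i a)) {a..b}"
    and init: "\<And>i. u i t0 \<ge> 0"
begin

lemma cont_sub: "t0 \<le> a \<Longrightarrow> continuous_on {a..b} (u i)"
  using continuous_on_subset[OF cont[where i=i and b=b]] by auto

lemma nonneg:
  assumes t: "t0 \<le> t"
  shows "u i t \<ge> 0"
proof -
  define n where "n r = (\<Sum>i\<in>UNIV. max 0 (- u i r))" for r
  have ncont: "continuous_on {t0..t} n" unfolding n_def by (intro continuous_intros cont)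
  have nnn: "0 \<le> n r" for r unfolding n_def by (simp add: sum_nonneg)
  have nint: "n integrable_on {p..q}" if "t0 \<le> p" for p q
    unfolding n_def using that
    by (intro integrable_continuous_interval continuous_intros cont_sub) auto
  have key: "max 0 (- u i r) \<le> \<sigma> * M1 * integral {t0..r} n" if r: "r \<in> {t0..t}" for i r
  proof (cases "u i r < 0")
    case False
    have "0 \<le> integral {t0..r} n" by (rule integral_nonneg[OF nint]) (auto simp: nnn)
    then show ?thesis using False sigma_pos M1_pos by simp
  next
    case True
    define Z where "Z = {t0..r} \<inter> u i -` {0..}"
    have "closed Z" unfolding Z_def
      by (rule continuous_closed_preimage[OF cont_sub]) auto
    moreover have "bounded Z" unfolding Z_def by (rule bounded_subset[of "{t0..r}"]) auto
    ultimately have "compact Z" by (simp add: compact_eq_bounded_closed)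
    moreover have "t0 \<in> Z" unfolding Z_def using r init by auto
    ultimately obtain s where s: "s \<in> Z" "\<And>z. z \<in> Z \<Longrightarrow> z \<le> s"
      using compact_attains_sup[of Z] by blast
    have s1: "t0 \<le> s" "s \<le> r" "u i s \<ge> 0" using s(1) unfolding Z_def by auto
    obtain z where z: "s \<le> z" "z \<le> r" "u i z = 0"
      using IVT2'[of "u i" r 0 s] True s1 cont_sub[of s] by auto
    then have "z \<in> Z" unfolding Z_def using s1 by auto
    then have "z = s" using s(2) z by force
    with z have us: "u i s = 0" by simp
    have npos: "u i q \<le> 0" if "q \<in> {s..r}" for q
    proof (rule ccontr)
      assume "\<not> u i q \<le> 0"
      then have "q \<in> Z" unfolding Z_def using that s1 by auto
      then have "q = s" using s(2) that by force
      with us \<open>\<not> u i q \<le> 0\<close> show False by simp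
    qed
    have I1: "((\<lambda>q. - (\<sigma> * (\<Sum>j\<in>UNIV. L q $ i $ j * u j q))) has_integral - (u i r - u i s)) {s..r}"
      by (rule has_integral_neg[OF eq[OF s1(1,2)]])
    have I2: "((\<lambda>q. \<sigma> * M1 * n q) has_integral (\<sigma> * M1 * integral {s..r} n)) {s..r}"
      by (rule has_integral_mult_right[OF integrable_integral[OF nint[OF s1(1)]]])
    have pw: "- (\<sigma> * (\<Sum>j\<in>UNIV. L q $ i $ j * u j q)) \<le> \<sigma> * M1 * n q" if q: "q \<in> {s..r}" for q
    proof -
      have "L q $ i $ j * (- u j q) \<le> M1 * max 0 (- u j q)" for j
      proof (cases "j = i")
        case True
        then have "L q $ i $ j * (- u j q) \<le> 0"
          using diagneg[of q i] npos[OF q] by (simp add: mult_nonpos_nonpos)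
        then show ?thesis using M1_pos by (smt (verit) mult_nonneg_nonneg)
      next
        case False
        have l0: "0 \<le> L q $ i $ j" using offdiag False by auto
        have lM: "L q $ i $ j \<le> M1" using bounded[of q i j] by simp
        have "L q $ i $ j * (- u j q) \<le> L q $ i $ j * max 0 (- u j q)"
          using l0 by (intro mult_left_mono) auto
        also have "\<dots> \<le> M1 * max 0 (- u j q)" using lM by (simp add: mult_right_mono)
        finally show ?thesis .
      qed
      then have "(\<Sum>j\<in>UNIV. L q $ i $ j * (- u j q)) \<le> (\<Sum>j\<in>UNIV. M1 * max 0 (- u j q))"
        by (rule sum_mono)
      also have "\<dots> = M1 * n q" unfolding n_def by (simp add: sum_distrib_left)
      finally have "(\<Sum>j\<in>UNIV. L q $ i $ j * (- u j q)) \<le> M1 * n q" .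
      then have "\<sigma> * (\<Sum>j\<in>UNIV. L q $ i $ j * (- u j q)) \<le> \<sigma> * (M1 * n q)"
        using sigma_pos by (simp add: mult_left_mono)
      moreover have "(\<Sum>j\<in>UNIV. L q $ i $ j * (- u j q)) = - (\<Sum>j\<in>UNIV. L q $ i $ j * u j q)"
        by (simp add: sum_negf)
      ultimately show ?thesis by simp
    qed
    have A: "- (u i r - u i s) \<le> \<sigma> * M1 * integral {s..r} n"
      by (rule has_integral_le[OF I1 I2 pw])
    have "integral {t0..s} n + integral {s..r} n = integral {t0..r} n"
      by (rule Henstock_Kurzweil_Integration.integral_combine[OF s1(1,2) nint]) simp
    moreover have "0 \<le> integral {t0..s} n" by (rule integral_nonneg[OF nint]) (auto simp: nnn)
    ultimately have "integral {s..r} n \<le> integral {t0..r} n" by linarith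
    then have "\<sigma> * M1 * integral {s..r} n \<le> \<sigma> * M1 * integral {t0..r} n"
      using sigma_pos M1_pos by (simp add: mult_left_mono)
    with A us True show ?thesis by simp
  qed
  have le: "n r \<le> (real CARD('n) * (\<sigma> * M1)) * integral {t0..r} n" if r: "r \<in> {t0..t}" for r
  proof -
    have "n r \<le> (\<Sum>i\<in>(UNIV::'n set). \<sigma> * M1 * integral {t0..r} n)"
      unfolding n_def[of r] by (rule sum_mono[OF key[OF r]])
    then show ?thesis using sum_constant[of "\<sigma> * M1 * integral {t0..r} n" "UNIV::'n set"] by (simp only: mult.assoc)
  qed
  have tt: "t \<in> {t0..t}" using t by simp
  have "n t = 0"
    by (rule gronwall0[OF ncont nnn le tt])
  then have "(\<Sum>i\<in>UNIV. max 0 (- u i t)) = 0" by (simp only: n_def)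
  then have "\<forall>i\<in>UNIV. max 0 (- u i t) = 0"
    by (subst (asm) sum_nonneg_eq_0_iff) auto
  then have "max 0 (- u i t) = 0" by blast
  then show ?thesis by linarith
qed

lemma decay:
  assumes a: "t0 \<le> a" and ab: "a \<le> b"
  shows "u i b \<ge> exp (- (\<sigma> * M1) * (b - a)) * u i a"
proof (rule decay_pure[OF cont_sub[OF a] _ ab])
  show "0 < \<sigma> * M1" using sigma_pos M1_pos by simp
  fix t assume t: "t \<in> {a..b}"
  have I1: "((\<lambda>q. \<sigma> * (\<Sum>j\<in>UNIV. L q $ i $ j * u j q)) has_integral (u i b - u i t)) {t..b}"
    using eq[of t b i] a t by auto
  have I2: "((\<lambda>q. - (\<sigma> * M1) * u i q) has_integral (- (\<sigma> * M1) * integral {t..b} (u i))) {t..b}"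
    using a t by (intro has_integral_mult_right integrable_integral integrable_continuous_interval cont_sub) auto
  have pw: "- (\<sigma> * M1) * u i q \<le> \<sigma> * (\<Sum>j\<in>UNIV. L q $ i $ j * u j q)" if q: "q \<in> {t..b}" for q
  proof -
    have qt0: "t0 \<le> q" using q t a by auto
    have "L q $ i $ i * u i q \<le> (\<Sum>j\<in>UNIV. L q $ i $ j * u j q)"
      by (rule member_le_sum) (auto intro!: mult_nonneg_nonneg offdiag nonneg qt0)
    moreover have "- M1 * u i q \<le> L q $ i $ i * u i q"
      using bounded[of q i i] nonneg[OF qt0, of i] by (intro mult_right_mono) auto
    ultimately have "- M1 * u i q \<le> (\<Sum>j\<in>UNIV. L q $ i $ j * u j q)" by linarith
    then have "\<sigma> * (- M1 * u i q) \<le> \<sigma> * (\<Sum>j\<in>UNIV. L q $ i $ j * u j q)"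
      using sigma_pos by (intro mult_left_mono) auto
    then show ?thesis by (simp add: algebra_simps)
  qed
  show "u i b - u i t \<ge> - (\<sigma> * M1) * integral {t..b} (u i)"
    by (rule has_integral_le[OF I2 I1 pw])
qed


lemma edge:
  assumes a: "t0 \<le> a" and T: "T > 0" and ij: "i \<noteq> j"
    and lint: "(\<lambda>r. L r $ i $ j) integrable_on {a..a+T}"
    and big: "integral {a..a+T} (\<lambda>r. L r $ i $ j) > \<delta>" and dpos: "\<delta> > 0"
    and cj: "u j a \<ge> c" and c: "c \<ge> 0"
  shows "u i (a+T) \<ge> \<sigma> * \<delta> * (exp (- (\<sigma> * M1) * T) * exp (- (\<sigma> * M1) * T) * c)
                         / (exp (- (\<sigma> * M1) * T) + \<sigma> * M1 * T)"
proof -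
  define E where "E = exp (- (\<sigma> * M1) * T)"
  define b where "b = a + T"
  have ab: "a \<le> b" using T unfolding b_def by simp
  have Epos: "E > 0" unfolding E_def by simp
  have lowj: "u j r \<ge> E * c" if r: "r \<in> {a..b}" for r
  proof -
    have "exp (- (\<sigma> * M1) * (r - a)) * u j a \<le> u j r"
      using decay[OF a, of r j] r by auto
    moreover have "E \<le> exp (- (\<sigma> * M1) * (r - a))"
      unfolding E_def using r sigma_pos M1_pos unfolding b_def
      by (auto intro!: mult_left_mono)
    moreover have "exp (- (\<sigma> * M1) * (r - a)) * c \<le> exp (- (\<sigma> * M1) * (r - a)) * u j a"
      using cj by simp
    ultimately show ?thesis using c
      by (smt (verit, best) mult_right_mono)
  qed
  obtain rs where rs: "rs \<in> {a..b}" "\<And>q. q \<in> {a..b} \<Longrightarrow> u i q \<le> u i rs"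
    using continuous_attains_sup[of "{a..b}" "u i"] cont_sub[OF a] ab by auto
  define Mx where "Mx = u i rs"
  have Mx0: "Mx \<ge> 0" unfolding Mx_def using rs a by (auto intro: nonneg)
  have I1: "((\<lambda>q. \<sigma> * (\<Sum>k\<in>UNIV. L q $ i $ k * u k q)) has_integral (u i b - u i a)) {a..b}"
    using eq[OF a ab] .
  have I2: "((\<lambda>q. - (\<sigma> * M1) * Mx + \<sigma> * (E * c) * L q $ i $ j) has_integral
      (measure lborel {a..b} *\<^sub>R (- (\<sigma> * M1) * Mx) + \<sigma> * (E * c) * integral {a..b} (\<lambda>r. L r $ i $ j))) {a..b}"
    using lint unfolding b_def
    by (intro has_integral_add has_integral_const_real has_integral_mult_right integrable_integral)
  have pw: "- (\<sigma> * M1) * Mx + \<sigma> * (E * c) * L q $ i $ j \<le> \<sigma> * (\<Sum>k\<in>UNIV. L q $ i $ k * u k q)"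
    if q: "q \<in> {a..b}" for q
  proof -
    have qt0: "t0 \<le> q" using q a by auto
    define f where "f k = L q $ i $ k * u k q" for k
    have fnn: "0 \<le> f k" if "k \<noteq> i" for k
      unfolding f_def using that by (auto intro!: mult_nonneg_nonneg offdiag nonneg qt0)
    have "(\<Sum>k\<in>UNIV. (if k = i then f i else 0) + (if k = j then f j else 0)) \<le> (\<Sum>k\<in>UNIV. f k)"
      by (rule sum_mono) (use ij fnn in auto)
    then have S: "f i + f j \<le> (\<Sum>k\<in>UNIV. f k)"
      by (simp add: sum.distrib)
    have fi: "- M1 * Mx \<le> f i"
    proof -
      have "- M1 * Mx \<le> - M1 * u i q" using rs(2)[OF q] M1_pos unfolding Mx_def by simp
      also have "\<dots> \<le> L q $ i $ i * u i q"
        using bounded[of q i i] nonneg[OF qt0, of i] by (intro mult_right_mono) auto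
      finally show ?thesis unfolding f_def .
    qed
    have fj: "E * c * L q $ i $ j \<le> f j"
    proof -
      have "0 \<le> L q $ i $ j" using offdiag ij by auto
      then have "L q $ i $ j * (E * c) \<le> L q $ i $ j * u j q"
        using lowj[OF q] by (intro mult_left_mono) auto
      then show ?thesis unfolding f_def by (simp add: algebra_simps)
    qed
    have "- M1 * Mx + E * c * L q $ i $ j \<le> (\<Sum>k\<in>UNIV. f k)" using S fi fj by linarith
    then have "\<sigma> * (- M1 * Mx + E * c * L q $ i $ j) \<le> \<sigma> * (\<Sum>k\<in>UNIV. f k)"
      using sigma_pos by (intro mult_left_mono) auto
    then show ?thesis unfolding f_def by (simp add: algebra_simps)
  qed
  have A: "measure lborel {a..b} *\<^sub>R (- (\<sigma> * M1) * Mx) + \<sigma> * (E * c) * integral {a..b} (\<lambda>r. L r $ i $ j)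
      \<le> u i b - u i a"
    by (rule has_integral_le[OF I2 I1 pw])
  have cont_ab: "measure lborel {a..b} = T" using ab unfolding b_def by simp
  have "\<sigma> * (E * c) * \<delta> \<le> \<sigma> * (E * c) * integral {a..b} (\<lambda>r. L r $ i $ j)"
    using big sigma_pos Epos c unfolding b_def by (intro mult_left_mono) auto
  moreover have "u i a \<ge> 0" using nonneg a by auto
  ultimately have X1: "u i b \<ge> \<sigma> * (E * c) * \<delta> - \<sigma> * M1 * T * Mx"
    using A cont_ab by (simp add: algebra_simps)
  have "u i b \<ge> exp (- (\<sigma> * M1) * (b - rs)) * Mx"
    using decay[of rs b i] rs a unfolding Mx_def by auto
  moreover have "E \<le> exp (- (\<sigma> * M1) * (b - rs))"
    unfolding E_def using rs sigma_pos M1_pos unfolding b_def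
    by (auto intro!: mult_left_mono)
  ultimately have X2: "u i b \<ge> E * Mx" using Mx0
    by (smt (verit, best) mult_right_mono)
  define Q where "Q = \<sigma> * M1 * T"
  have Q0: "Q \<ge> 0" unfolding Q_def using sigma_pos M1_pos T by simp
  have "E * (\<sigma> * (E * c) * \<delta> - Q * Mx) \<le> E * u i b"
    using X1 Epos unfolding Q_def by (intro mult_left_mono) auto
  moreover have "Q * (E * Mx) \<le> Q * u i b" using X2 Q0 by (intro mult_left_mono) auto
  ultimately have "E * (\<sigma> * (E * c) * \<delta>) \<le> (E + Q) * u i b"
    by (simp add: algebra_simps)
  then have "E * (\<sigma> * (E * c) * \<delta>) / (E + Q) \<le> u i b"
    using Epos Q0 by (simp add: pos_divide_le_eq mult.commute)
  then show ?thesis unfolding E_def[symmetric] Q_def[symmetric] b_def[symmetric]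
    by (simp add: algebra_simps)
qed


lemma step:
  assumes a: "t0 \<le> a" and T: "T > 0" and dpos: "\<delta> > 0"
    and lint: "\<And>i j. (\<lambda>r. L r $ i $ j) integrable_on {a..a+T}"
    and xy: "(x,y) \<in> graph_edges L a (a+T) \<delta> \<union> Id"
    and cx: "c \<le> u x a" and c: "0 \<le> c"
  shows "min (exp (- (\<sigma> * M1) * T)) (\<sigma> * \<delta> * (exp (- (\<sigma> * M1) * T) * exp (- (\<sigma> * M1) * T))
            / (exp (- (\<sigma> * M1) * T) + \<sigma> * M1 * T)) * c \<le> u y (a+T)"
proof -
  define E where "E = exp (- (\<sigma> * M1) * T)"
  define Q where "Q = \<sigma> * M1 * T"
  have Epos: "E > 0" unfolding E_def by simp
  have Q0: "Q \<ge> 0" unfolding Q_def using sigma_pos M1_pos T by simp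
  have "u y (a+T) \<ge> min E (\<sigma> * \<delta> * (E * E) / (E + Q)) * c"
  proof (cases "x = y")
    case True
    have "exp (- (\<sigma> * M1) * (a + T - a)) * u y a \<le> u y (a+T)"
      using decay[OF a, of "a+T" y] T by simp
    then have "E * u y a \<le> u y (a+T)" unfolding E_def by simp
    moreover have "E * c \<le> E * u y a" using cx True Epos by (intro mult_left_mono) auto
    moreover have "min E (\<sigma> * \<delta> * (E * E) / (E + Q)) * c \<le> E * c"
      using c by (intro mult_right_mono) auto
    ultimately show ?thesis by linarith
  next
    case False
    then have big: "integral {a..a+T} (\<lambda>r. L r $ y $ x) > \<delta>"
      using xy unfolding graph_edges_def by auto
    have "\<sigma> * \<delta> * (E * E * c) / (E + Q) \<le> u y (a+T)"
      using edge[OF a T _ lint big dpos cx c] False unfolding E_def Q_def by auto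
    moreover have "min E (\<sigma> * \<delta> * (E * E) / (E + Q)) * c \<le> (\<sigma> * \<delta> * (E * E) / (E + Q)) * c"
      using c by (intro mult_right_mono) auto
    moreover have "(\<sigma> * \<delta> * (E * E) / (E + Q)) * c = \<sigma> * \<delta> * (E * E * c) / (E + Q)"
      by simp
    ultimately show ?thesis by linarith
  qed
  then show ?thesis unfolding E_def Q_def .
qed

end


theorem lemma9:
  fixes L :: "real \<Rightarrow> real^'n::finite^'n"
    and V :: "real \<Rightarrow> real \<Rightarrow> real^'n^'n"
    and \<sigma> M1 \<delta> T :: real
  assumes meas: "\<And>i j. (\<lambda>t. L t $ i $ j) \<in> borel_measurable lborel"
    and offdiag: "\<And>t i j. i \<noteq> j \<Longrightarrow> L t $ i $ j \<ge> 0"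
    and diag: "\<And>t i. L t $ i $ i = - (\<Sum>j\<in>UNIV - {i}. L t $ i $ j)"
    and M1_pos: "M1 > 0"
    and bounded: "\<And>t i j. \<bar>L t $ i $ j\<bar> \<le> M1"
    and sigma_pos: "\<sigma> > 0"
    and V_sol: "\<And>t0 t. 0 \<le> t0 \<Longrightarrow> t0 \<le> t \<Longrightarrow>
        ((\<lambda>s. \<sigma> *\<^sub>R (L s ** V s t0)) has_integral (V t t0 - mat 1)) {t0..t}"
    and delta_pos: "\<delta> > 0"
    and T_pos: "T > 0"
    and span: "\<And>t1. t1 \<ge> 0 \<Longrightarrow> has_spanning_tree (graph_edges L t1 (t1 + T) \<delta>)"
  shows "\<exists>\<delta>1 > 0. \<exists>T1 > 0. \<forall>t0 \<ge> 0. eta (V (t0 + T1) t0) > \<delta>1"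
proof -
  define E where "E = exp (- (\<sigma> * M1) * T)"
  define \<gamma> where "\<gamma> = min E (\<sigma> * \<delta> * (E * E) / (E + \<sigma> * M1 * T))"
  define N where "N = CARD('n) * CARD('n)"
  have Epos: "E > 0" unfolding E_def by simp
  have gpos: "\<gamma> > 0" unfolding \<gamma>_def using Epos sigma_pos M1_pos T_pos delta_pos
    by (simp add: add_pos_pos)
  have Npos: "N > 0" unfolding N_def by simp
  have lint: "\<And>i j a b. (\<lambda>r. L r $ i $ j) integrable_on {a..b}"
    by (rule integrable_bdd[OF meas bounded])
  have diagneg: "L t $ i $ i \<le> 0" for t i
  proof -
    have "0 \<le> (\<Sum>j\<in>UNIV - {i}. L t $ i $ j)" by (rule sum_nonneg) (auto intro: offdiag)
    then show ?thesis using diag[of t i] by linarith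
  qed
  have comp: "((\<lambda>s. \<sigma> * (\<Sum>j\<in>UNIV. L s $ i $ j * V s t0 $ j $ k)) has_integral
                 (V t t0 $ i $ k - (if i = k then 1 else 0))) {t0..t}"
    if "0 \<le> t0" "t0 \<le> t" for t0 t i k
  proof -
    have bl: "bounded_linear (\<lambda>x::real^'n^'n. x $ i $ k)"
      using bounded_linear_compose[OF bounded_linear_vec_nth[of k] bounded_linear_vec_nth[of i]]
      by (simp add: o_def)
    from has_integral_linear[OF V_sol[OF that] bl] show ?thesis
      by (simp add: o_def matrix_matrix_mult_def mat_def)
  qed
  have Vinit: "V t0 t0 $ i $ k = (if i = k then 1 else 0)" if "0 \<le> t0" for t0 i k
  proof -
    have h: "((\<lambda>s. \<sigma> * (\<Sum>j\<in>UNIV. L s $ i $ j * V s t0 $ j $ k)) has_integral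
                 (V t0 t0 $ i $ k - (if i = k then 1 else 0))) {t0}"
      using comp[OF that order_refl, of i k] by simp
    show ?thesis using has_integral_unique[OF h has_integral_refl(2)] by simp
  qed
  have sysI: "sys L \<sigma> M1 t0 (\<lambda>i t. V t t0 $ i $ k)" if t0: "0 \<le> t0" for t0 k
  proof
    show "\<And>t i j. i \<noteq> j \<Longrightarrow> L t $ i $ j \<ge> 0" by (rule offdiag)
    show "\<And>t i. L t $ i $ i \<le> 0" by (rule diagneg)
    show "\<And>t i j. \<bar>L t $ i $ j\<bar> \<le> M1" by (rule bounded)
    show "M1 > 0" "\<sigma> > 0" by (fact M1_pos, fact sigma_pos)
    show "\<And>i. V t0 t0 $ i $ k \<ge> 0" using Vinit[OF t0] by simp
  next
    fix i b
    show "continuous_on {t0..b} (\<lambda>t. V t t0 $ i $ k)"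
    proof (cases "t0 \<le> b")
      case False then show ?thesis by simp
    next
      case True
      define f where "f = (\<lambda>s. \<sigma> * (\<Sum>j\<in>UNIV. L s $ i $ j * V s t0 $ j $ k))"
      have fi: "f integrable_on {t0..b}" unfolding f_def using comp[OF t0 True] by blast
      have c1: "continuous_on {t0..b} (\<lambda>t. (if i = k then 1 else 0) + integral {t0..t} f)"
        by (intro continuous_intros indefinite_integral_continuous_1[OF fi])
      have c2: "(if i = k then 1 else 0) + integral {t0..t} f = V t t0 $ i $ k"
        if "t \<in> {t0..b}" for t
      proof -
        have "t0 \<le> t" using that by simp
        from integral_unique[OF comp[OF t0 this, of i k]] show ?thesis unfolding f_def by simp
      qed
      show ?thesis by (rule continuous_on_eq[OF c1 c2])
    qed
  next
    fix i a b assume ab: "t0 \<le> a" "a \<le> b"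
    define f where "f = (\<lambda>s. \<sigma> * (\<Sum>j\<in>UNIV. L s $ i $ j * V s t0 $ j $ k))"
    have tb: "t0 \<le> b" using ab by linarith
    have fi: "f integrable_on {t0..b}" unfolding f_def using comp[OF t0 tb, of i k] by blast
    have "integral {t0..a} f + integral {a..b} f = integral {t0..b} f"
      by (rule Henstock_Kurzweil_Integration.integral_combine[OF ab fi])
    moreover have "integral {t0..a} f = V a t0 $ i $ k - (if i = k then 1 else 0)"
      using integral_unique[OF comp[OF t0, of a i k]] ab unfolding f_def by auto
    moreover have "integral {t0..b} f = V b t0 $ i $ k - (if i = k then 1 else 0)"
      using integral_unique[OF comp[OF t0, of b i k]] ab unfolding f_def by auto
    ultimately have "integral {a..b} f = V b t0 $ i $ k - V a t0 $ i $ k" by simp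
    moreover have "f integrable_on {a..b}"
      by (rule integrable_subinterval_real[OF fi]) (use ab in auto)
    ultimately show "(f has_integral (V b t0 $ i $ k - V a t0 $ i $ k)) {a..b}"
      by (metis integrable_integral)
  qed
  show ?thesis
  proof (intro exI conjI allI impI)
    show "\<gamma> ^ N / 2 > 0" using gpos by simp
    show "real N * T > 0" using Npos T_pos by simp
    fix t0 :: real assume t0: "0 \<le> t0"
    define e where "e = t0 + real N * T"
    define F where "F j = graph_edges L (e - real (Suc j) * T) (e - real (Suc j) * T + T) \<delta>" for j
    have roots: "\<exists>\<rho>. \<forall>v. (\<rho>,v) \<in> (F j)\<^sup>*" if j: "j < CARD('n) * CARD('n)" for j
    proof -
      have "real (Suc j) \<le> real N" using j unfolding N_def by linarith
      then have "real (Suc j) * T \<le> real N * T" using T_pos by (intro mult_right_mono) auto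
      then have "e - real (Suc j) * T \<ge> 0" unfolding e_def using t0 by linarith
      from span[OF this] show ?thesis unfolding F_def has_spanning_tree_def .
    qed
    obtain \<rho> where \<rho>: "\<forall>y. (\<rho>,y) \<in> Qrel (\<lambda>j. F j \<union> Id) N"
      using comb[of F] roots unfolding N_def by blast
    interpret S: sys L \<sigma> M1 t0 "\<lambda>i t. V t t0 $ i $ \<rho>" by (rule sysI[OF t0])
    have path: "\<gamma> ^ j * c \<le> V e t0 $ y $ \<rho>"
      if "j \<le> N" "(x,y) \<in> Qrel (\<lambda>j. F j \<union> Id) j" "0 \<le> c" "c \<le> V (e - real j * T) t0 $ x $ \<rho>"
      for j x y c
      using that
    proof (induction j arbitrary: x c)
      case 0
      then show ?case by simp
    next
      case (Suc j)
      from Suc.prems(2) obtain z where xz: "(x,z) \<in> F j \<union> Id" and zy: "(z,y) \<in> Qrel (\<lambda>j. F j \<union> Id) j"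
        by auto
      define a where "a = e - real (Suc j) * T"
      have "real (Suc j) * T \<le> real N * T" using Suc.prems(1) T_pos by (intro mult_right_mono) auto
      then have a0: "t0 \<le> a" unfolding a_def e_def by linarith
      have aT: "a + T = e - real j * T" unfolding a_def by (simp add: algebra_simps)
      have "\<gamma> * c \<le> V (a + T) t0 $ z $ \<rho>"
        using S.step[OF a0 T_pos delta_pos lint, of x z c] xz Suc.prems(3,4)
        unfolding \<gamma>_def E_def F_def a_def by simp
      then have "\<gamma> ^ j * (\<gamma> * c) \<le> V e t0 $ y $ \<rho>"
        using Suc.IH[of z "\<gamma> * c"] Suc.prems(1,3) zy gpos aT by simp
      then show ?case by (simp add: algebra_simps)
    qed
    have col: "\<gamma> ^ N \<le> V e t0 $ y $ \<rho>" for y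
      using path[of N \<rho> y 1] \<rho> Vinit[OF t0, of \<rho> \<rho>] unfolding e_def by simp
    have nn: "0 \<le> V e t0 $ i $ k" for i k
    proof -
      interpret S2: sys L \<sigma> M1 t0 "\<lambda>i t. V t t0 $ i $ k" by (rule sysI[OF t0])
      show ?thesis using S2.nonneg[of e i] T_pos Npos unfolding e_def by simp
    qed
    have "\<gamma> ^ N \<le> eta (V e t0)"
      unfolding eta_def
    proof (rule Min.boundedI)
      have "{\<Sum>k\<in>UNIV. min (V e t0 $ i $ k) (V e t0 $ j $ k) |i j. True}
            = (\<lambda>(i,j). \<Sum>k\<in>UNIV. min (V e t0 $ i $ k) (V e t0 $ j $ k)) ` UNIV" by auto
      then show "finite {\<Sum>k\<in>UNIV. min (V e t0 $ i $ k) (V e t0 $ j $ k) |i j. True}" by simp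
      show "{\<Sum>k\<in>UNIV. min (V e t0 $ i $ k) (V e t0 $ j $ k) |i j. True} \<noteq> {}" by auto
    next
      fix s assume "s \<in> {\<Sum>k\<in>UNIV. min (V e t0 $ i $ k) (V e t0 $ j $ k) |i j. True}"
      then obtain i j where s: "s = (\<Sum>k\<in>UNIV. min (V e t0 $ i $ k) (V e t0 $ j $ k))" by auto
      have "min (V e t0 $ i $ \<rho>) (V e t0 $ j $ \<rho>) \<le> s"
        unfolding s by (rule member_le_sum) (auto simp: nn)
      moreover have "\<gamma> ^ N \<le> min (V e t0 $ i $ \<rho>) (V e t0 $ j $ \<rho>)" using col by simp
      ultimately show "\<gamma> ^ N \<le> s" by linarith
    qed
    moreover have "\<gamma> ^ N / 2 < \<gamma> ^ N" using gpos by simp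
    ultimately show "eta (V (t0 + real N * T) t0) > \<gamma> ^ N / 2" unfolding e_def by linarith
  qed
qed

end
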